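(* The $T$-coalgebra $(\mathcal{E}_0,\varepsilon)$ is locally finite: every $\phi\in\mathcal{E}_0$ is contained in a finite subcoalgebra of $(\mathcal{E}_0,\varepsilon)$.
   Context: Standing assumptions: $T:\mathbf{Set}\to\mathbf{Set}$ is a functor; $\mathcal{L}$ is a set of modalities with arities ($L/n$), each $L/n$ assigned an $n$-ary monotone singleton-preserving predicate lifting $[\![L]\!]$ for $T$ (a family $[\![L]\!]_X:(\mathcal{P}X)^n\to\mathcal{P}(TX)$, natural w.r.t. preimages under maps $f$ via $Tf$, monotone in each argument, with $|[\![L]\!]_X(\{x_1\},\dots,\{x_n\})|=1$ for all $x_i\in X$). Fix a set $V$ of variables. Expressions: $\phi::=z\mid\nu z.\,\phi\mid L(\phi_1,\dots,\phi_n)$. Closed: every variable occurrence bound by a $\nu$; guarded: every variable occurrence separated from its binding $\nu$ by at least one modality; $\mathcal{E}_0$ = closed guarded expressions. A $\nu$ occurrence is top-level if it is not in the scope of a modality. The coalgebra $\varepsilon:\mathcal{E}_0\to T\mathcal{E}_0$ is defined by $\varepsilon(L(\phi_1,\dots,\phi_n))=$ the unique element of $[\![L]\!]_{\mathcal{E}_0}(\{\phi_1\},\dots,\{\phi_n\})$, and $\varepsilon(\nu x.\phi)=\varepsilon(\phi[\nu x.\phi/x])$ (well-defined by induction on the number of top-level fixed point operators, which decreases by guardedness). A subcoalgebra of $(X,\xi)$ is a subset $Y\subseteq X$ with $\xi[Y]\subseteq T(\iota)[TY]$ for the inclusion $\iota:Y\to X$ (equivalently, a coalgebra structure on $Y$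 making $\iota$ a coalgebra morphism). *)

theory Defs
  imports Main
begin

text \<open>Expressions phi ::= z | nu z. phi | L(phi_1,...,phi_n) over variables of type 'v
  and modality names of type 'l; the arity of L is given separately by a function ar.\<close>

datatype ('l, 'v) expr = Var 'v | Nu 'v "('l, 'v) expr" | Mod 'l "('l, 'v) expr list"

fun wf_expr :: "('l \<Rightarrow> nat) \<Rightarrow> ('l, 'v) expr \<Rightarrow> bool" where
  "wf_expr ar (Var x) = True"
| "wf_expr ar (Nu x e) = wf_expr ar e"
| "wf_expr ar (Mod L es) = (length es = ar L \<and> (\<forall>e\<in>set es. wf_expr ar e))"

fun fvars :: "('l, 'v) expr \<Rightarrow> 'v set" where
  "fvars (Var x) = {x}"
| "fvars (Nu x e) = fvars e - {x}"
| "fvars (Mod L es) = (\<Union>e\<in>set es. fvars e)"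

definition closed_expr :: "('l, 'v) expr \<Rightarrow> bool" where
  "closed_expr e \<longleftrightarrow> fvars e = {}"

text \<open>guarded_aux U e: U is the set of variables whose binding nu is NOT separated
  from the current position by a modality.\<close>
fun guarded_aux :: "'v set \<Rightarrow> ('l, 'v) expr \<Rightarrow> bool" where
  "guarded_aux U (Var x) = (x \<notin> U)"
| "guarded_aux U (Nu x e) = guarded_aux (insert x U) e"
| "guarded_aux U (Mod L es) = (\<forall>e\<in>set es. guarded_aux {} e)"

definition guarded :: "('l, 'v) expr \<Rightarrow> bool" where
  "guarded e \<longleftrightarrow> guarded_aux {} e"

text \<open>Substitution of s for the free occurrences of x (only used with closed s,
  so no capture can occur).\<close>
fun subst :: "'v \<Rightarrow> ('l, 'v) expr \<Rightarrow> ('l, 'v) expr \<Rightarrow> ('l, 'v) expr" where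
  "subst x s (Var y) = (if x = y then s else Var y)"
| "subst x s (Nu y e) = (if x = y then Nu y e else Nu y (subst x s e))"
| "subst x s (Mod L es) = Mod L (map (subst x s) es)"

definition E0 :: "('l \<Rightarrow> nat) \<Rightarrow> ('l, 'v) expr set" where
  "E0 ar = {e. wf_expr ar e \<and> closed_expr e \<and> guarded e}"

text \<open>A functor T on the category whose objects are the subsets of the type 'x and whose
  morphisms X -> Y are (extensional) functions f with f ` X \<subseteq> Y.
  Tobj X is the set T X (inside an ambient type 't), Tmap X Y f is T f : T X -> T Y.\<close>
definition set_functor :: "('x set \<Rightarrow> 't set) \<Rightarrow> ('x set \<Rightarrow> 'x set \<Rightarrow> ('x \<Rightarrow> 'x) \<Rightarrow> 't \<Rightarrow> 't) \<Rightarrow> bool" where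
  "set_functor Tobj Tmap \<longleftrightarrow>
     (\<forall>X Y f. f ` X \<subseteq> Y \<longrightarrow> Tmap X Y f ` Tobj X \<subseteq> Tobj Y)
   \<and> (\<forall>X Y f g t. f ` X \<subseteq> Y \<longrightarrow> (\<forall>x\<in>X. f x = g x) \<longrightarrow> t \<in> Tobj X \<longrightarrow> Tmap X Y f t = Tmap X Y g t)
   \<and> (\<forall>X t. t \<in> Tobj X \<longrightarrow> Tmap X X id t = t)
   \<and> (\<forall>X Y Z f g t. f ` X \<subseteq> Y \<longrightarrow> g ` Y \<subseteq> Z \<longrightarrow> t \<in> Tobj X \<longrightarrow>
        Tmap X Z (g \<circ> f) t = Tmap Y Z g (Tmap X Y f t))"

text \<open>lift L X As is the predicate lifting [[L]]_X applied to the argument list As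
  (only meaningful when length As = ar L and every element of As is a subset of X).\<close>
definition monotone_sp_pred_lifting ::
  "('l \<Rightarrow> nat) \<Rightarrow> ('x set \<Rightarrow> 't set) \<Rightarrow> ('x set \<Rightarrow> 'x set \<Rightarrow> ('x \<Rightarrow> 'x) \<Rightarrow> 't \<Rightarrow> 't)
     \<Rightarrow> ('l \<Rightarrow> 'x set \<Rightarrow> 'x set list \<Rightarrow> 't set) \<Rightarrow> 'l \<Rightarrow> bool" where
  "monotone_sp_pred_lifting ar Tobj Tmap lift L \<longleftrightarrow>
     (\<forall>X As. length As = ar L \<longrightarrow> (\<forall>A\<in>set As. A \<subseteq> X) \<longrightarrow> lift L X As \<subseteq> Tobj X)
   \<and> (\<forall>X Y f Bs. f ` X \<subseteq> Y \<longrightarrow> length Bs = ar L \<longrightarrow> (\<forall>B\<in>set Bs. B \<subseteq> Y) \<longrightarrow>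
        lift L X (map (\<lambda>B. X \<inter> f -` B) Bs) = {t \<in> Tobj X. Tmap X Y f t \<in> lift L Y Bs})
   \<and> (\<forall>X As Bs. length As = ar L \<longrightarrow> length Bs = ar L \<longrightarrow> (\<forall>B\<in>set Bs. B \<subseteq> X) \<longrightarrow>
        (\<forall>i<ar L. As ! i \<subseteq> Bs ! i) \<longrightarrow> lift L X As \<subseteq> lift L X Bs)
   \<and> (\<forall>X xs. length xs = ar L \<longrightarrow> set xs \<subseteq> X \<longrightarrow>
        (\<exists>!t. t \<in> lift L X (map (\<lambda>x. {x}) xs)))"

text \<open>One unfolding step of a top-level fixed point, and the iterated unfolding until
  a modality is at the top (which happens for guarded closed expressions).\<close>
definition nu_unfold :: "('l, 'v) expr \<Rightarrow> ('l, 'v) expr" where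
  "nu_unfold e = (case e of Nu x b \<Rightarrow> subst x e b | _ \<Rightarrow> e)"

definition is_mod :: "('l, 'v) expr \<Rightarrow> bool" where
  "is_mod e \<longleftrightarrow> (\<exists>L es. e = Mod L es)"

definition head_nf :: "('l, 'v) expr \<Rightarrow> ('l, 'v) expr" where
  "head_nf e = (nu_unfold ^^ (LEAST n. is_mod ((nu_unfold ^^ n) e))) e"

text \<open>eps(L(phi_1..phi_n)) = unique element of [[L]]_E0({phi_1},..,{phi_n});
  eps(nu x. phi) = eps(phi[nu x. phi / x]).\<close>
definition eps :: "('l \<Rightarrow> nat) \<Rightarrow> ('l \<Rightarrow> ('l, 'v) expr set \<Rightarrow> ('l, 'v) expr set list \<Rightarrow> 't set)
     \<Rightarrow> ('l, 'v) expr \<Rightarrow> 't" where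
  "eps ar lift e = (case head_nf e of
      Mod L es \<Rightarrow> the_elem (lift L (E0 ar) (map (\<lambda>a. {a}) es))
    | _ \<Rightarrow> undefined)"

definition subcoalgebra :: "('x set \<Rightarrow> 't set) \<Rightarrow> ('x set \<Rightarrow> 'x set \<Rightarrow> ('x \<Rightarrow> 'x) \<Rightarrow> 't \<Rightarrow> 't)
     \<Rightarrow> 'x set \<Rightarrow> ('x \<Rightarrow> 't) \<Rightarrow> 'x set \<Rightarrow> bool" where
  "subcoalgebra Tobj Tmap X xi Y \<longleftrightarrow> Y \<subseteq> X \<and> xi ` Y \<subseteq> Tmap Y X id ` Tobj Y"

definition locally_finite :: "('x set \<Rightarrow> 't set) \<Rightarrow> ('x set \<Rightarrow> 'x set \<Rightarrow> ('x \<Rightarrow> 'x) \<Rightarrow> 't \<Rightarrow> 't)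
     \<Rightarrow> 'x set \<Rightarrow> ('x \<Rightarrow> 't) \<Rightarrow> bool" where
  "locally_finite Tobj Tmap X xi \<longleftrightarrow>
     (\<forall>x\<in>X. \<exists>Y. finite Y \<and> x \<in> Y \<and> subcoalgebra Tobj Tmap X xi Y)"

end

theory Submission
  imports Defs
begin

fun sub :: "('v \<Rightarrow> ('l,'v) expr option) \<Rightarrow> ('l,'v) expr \<Rightarrow> ('l,'v) expr" where
  "sub \<rho> (Var x) = (case \<rho> x of Some t \<Rightarrow> t | None \<Rightarrow> Var x)"
| "sub \<rho> (Nu x b) = Nu x (sub (\<rho>(x:=None)) b)"
| "sub \<rho> (Mod L es) = Mod L (map (sub \<rho>) es)"

fun G :: "('v \<Rightarrow> ('l,'v) expr option) \<Rightarrow> ('l,'v) expr \<Rightarrow> ('l,'v) expr set" where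
  "G \<rho> (Var x) = {}"
| "G \<rho> (Nu x b) = insert (sub \<rho> (Nu x b)) (G (\<rho>(x \<mapsto> sub \<rho> (Nu x b))) b)"
| "G \<rho> (Mod L es) = insert (sub \<rho> (Mod L es)) (\<Union>e\<in>set es. G \<rho> e)"

fun succ :: "('l,'v) expr \<Rightarrow> ('l,'v) expr set" where
  "succ (Var x) = {}"
| "succ (Nu x b) = {subst x (Nu x b) b}"
| "succ (Mod L es) = set es"

fun topnu :: "('l,'v) expr \<Rightarrow> nat" where
  "topnu (Var x) = 0"
| "topnu (Nu x b) = Suc (topnu b)"
| "topnu (Mod L es) = 0"

lemma finite_G: "finite (G \<rho> e)"
  by (induction \<rho> e rule: G.induct) (simp_all del: fun_upd_apply)

lemma subst_nofree: "x \<notin> fvars t \<Longrightarrow> subst x s t = t"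
  by (induction t) (auto intro: map_idI)

lemma fvars_subst: "fvars (subst x s t) \<subseteq> (fvars t - {x}) \<union> fvars s"
  by (induction t) auto

lemma sub_empty: "sub Map.empty e = e"
  by (induction e) (auto intro: map_idI)

lemma fvars_sub: "\<forall>t\<in>ran \<rho>. fvars t = {} \<Longrightarrow> fvars (sub \<rho> e) = fvars e - dom \<rho>"
proof (induction \<rho> e rule: sub.induct)
  case (1 \<rho> x)
  then show ?case by (auto split: option.splits simp: ran_def)
next
  case (2 \<rho> x b)
  have "\<forall>t\<in>ran (\<rho>(x:=None)). fvars t = {}" using 2(2) by (auto simp: ran_def)
  then have e: "fvars (sub (\<rho>(x:=None)) b) = fvars b - (dom \<rho> - {x})"
    using 2(1) by (simp del: fun_upd_apply)
  show ?case by (simp del: fun_upd_apply add: e) blast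
next
  case (3 \<rho> L es)
  then show ?case by auto
qed

lemma subst_sub:
  assumes "\<forall>t\<in>ran \<rho>. fvars t = {}" "fvars N = {}"
  shows "subst x N (sub (\<rho>(x:=None)) b) = sub (\<rho>(x\<mapsto>N)) b"
  using assms
proof (induction b arbitrary: \<rho>)
  case (Var y)
  then show ?case
    by (auto split: option.splits simp: ran_def subst_nofree)
next
  case (Nu y c)
  show ?case
  proof (cases "y = x")
    case True
    have "(\<rho>(x:=None))(x:=None) = (\<rho>(x\<mapsto>N))(x:=None)" by simp
    then show ?thesis using True by (simp del: fun_upd_apply fun_upd_upd)
  next
    case False
    have r: "\<forall>t\<in>ran (\<rho>(y:=None)). fvars t = {}" using Nu(2) by (auto simp: ran_def)
    have "subst x N (sub ((\<rho>(y:=None))(x:=None)) c) = sub ((\<rho>(y:=None))(x\<mapsto>N)) c"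
      using Nu(1)[OF r Nu(3)] .
    moreover have "(\<rho>(y:=None))(x:=None) = (\<rho>(x:=None))(y:=None)"
      "(\<rho>(y:=None))(x\<mapsto>N) = (\<rho>(x\<mapsto>N))(y:=None)" using False by (auto simp: fun_eq_iff)
    ultimately show ?thesis using False by (simp del: fun_upd_apply)
  qed
next
  case (Mod L es)
  then show ?case by auto
qed

lemma sub_in_G: "fvars e \<subseteq> dom \<rho> \<Longrightarrow> sub \<rho> e \<in> G \<rho> e \<union> ran \<rho>"
  by (cases e) (auto simp: ran_def)

lemma G_closed:
  "\<forall>t\<in>ran \<rho>. fvars t = {} \<Longrightarrow> fvars e \<subseteq> dom \<rho> \<Longrightarrow> w \<in> G \<rho> e \<Longrightarrow> succ w \<subseteq> G \<rho> e \<union> ran \<rho>"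
proof (induction \<rho> e arbitrary: w rule: G.induct)
  case (1 \<rho> x)
  then show ?case by simp
next
  case (2 \<rho> x b)
  define N where "N = sub \<rho> (Nu x b)"
  have fN: "fvars N = {}" unfolding N_def using fvars_sub[OF 2(2)] 2(3) by blast
  have r: "\<forall>t\<in>ran (\<rho>(x\<mapsto>N)). fvars t = {}" using 2(2) fN by (auto simp: ran_def)
  have d: "fvars b \<subseteq> dom (\<rho>(x\<mapsto>N))" using 2(3) by auto
  have ranI: "ran (\<rho>(x\<mapsto>N)) \<subseteq> insert N (ran \<rho>)" by (auto simp: ran_def)
  have GN: "G \<rho> (Nu x b) = insert N (G (\<rho>(x\<mapsto>N)) b)" by (simp add: N_def)
  show ?case
  proof (cases "w = N")
    case True
    have "succ N = {sub (\<rho>(x\<mapsto>N)) b}"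
      using subst_sub[OF 2(2) fN, of x b] by (simp add: N_def)
    moreover have "sub (\<rho>(x\<mapsto>N)) b \<in> G (\<rho>(x\<mapsto>N)) b \<union> ran (\<rho>(x\<mapsto>N))"
      using sub_in_G[OF d] .
    ultimately show ?thesis using True GN ranI by auto
  next
    case False
    then have "w \<in> G (\<rho>(x\<mapsto>N)) b" using 2(4) GN by auto
    then have "succ w \<subseteq> G (\<rho>(x\<mapsto>N)) b \<union> ran (\<rho>(x\<mapsto>N))"
      using 2(1)[folded N_def, OF r d] by blast
    then show ?thesis using GN ranI by auto
  qed
next
  case (3 \<rho> L es)
  show ?case
  proof (cases "w = sub \<rho> (Mod L es)")
    case True
    have "sub \<rho> e \<in> G \<rho> (Mod L es) \<union> ran \<rho>" if "e \<in> set es" for e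
      using sub_in_G[of e \<rho>] 3(3) that by auto
    then show ?thesis using True by auto
  next
    case False
    then obtain e where e: "e \<in> set es" "w \<in> G \<rho> e" using 3(4) by auto
    then have "succ w \<subseteq> G \<rho> e \<union> ran \<rho>" using 3(1)[OF e(1) 3(2) _ e(2)] 3(3) by auto
    then show ?thesis using e by auto
  qed
qed

lemma guarded_aux_extra: "V \<inter> fvars e = {} \<Longrightarrow> guarded_aux (U \<union> V) e = guarded_aux U e"
proof (induction e arbitrary: U V)
  case (Nu x e)
  have "insert x (U \<union> V) = insert x U \<union> (V - {x})" by auto
  moreover have "(V - {x}) \<inter> fvars e = {}" using Nu(2) by auto
  ultimately have "guarded_aux (insert x U \<union> (V - {x})) e = guarded_aux (insert x U) e"
    using Nu(1) by blast
  then show ?case using \<open>insert x (U \<union> V) = insert x U \<union> (V - {x})\<close> by simp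
qed auto

lemma guarded_closed: "fvars N = {} \<Longrightarrow> guarded_aux {} N \<Longrightarrow> guarded_aux V N"
  using guarded_aux_extra[of V N "{}"] by simp

lemma guarded_subst:
  "guarded_aux U b \<Longrightarrow> guarded_aux {} N \<Longrightarrow> fvars N = {} \<Longrightarrow> guarded_aux (U - {x}) (subst x N b)"
proof (induction b arbitrary: U)
  case (Var y)
  then show ?case using guarded_closed by auto
next
  case (Nu y c)
  show ?case
  proof (cases "y = x")
    case True
    then show ?thesis using Nu(2) by (simp add: insert_absorb)
  next
    case False
    have "guarded_aux (insert y U - {x}) (subst x N c)" using Nu by simp
    moreover have "insert y U - {x} = insert y (U - {x})" using False by auto
    ultimately show ?thesis using False by simp
  qed
next
  case (Mod L es)
  then show ?case by fastforce
qed

lemma wf_subst: "wf_expr ar b \<Longrightarrow> wf_expr ar N \<Longrightarrow> wf_expr ar (subst x N b)"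
  by (induction b) auto

lemma topnu_subst: "guarded_aux U b \<Longrightarrow> x \<in> U \<Longrightarrow> topnu (subst x N b) = topnu b"
  by (induction b arbitrary: U) auto

lemma unfold_E0: "e \<in> E0 ar \<Longrightarrow> nu_unfold e \<in> E0 ar"
proof (cases e)
  case (Nu x b)
  assume e: "e \<in> E0 ar"
  have f: "fvars (Nu x b) = {}" "guarded_aux {x} b" "wf_expr ar b" "guarded_aux {} (Nu x b)"
    using e Nu by (auto simp: E0_def closed_expr_def guarded_def)
  have "fvars (subst x (Nu x b) b) = {}" using fvars_subst[of x "Nu x b" b] f by auto
  moreover have "guarded_aux {} (subst x (Nu x b) b)"
    using guarded_subst[OF f(2) f(4) f(1), of x] by simp
  moreover have "wf_expr ar (subst x (Nu x b) b)" using wf_subst f(3) by fastforce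
  ultimately show ?thesis using Nu by (simp add: nu_unfold_def E0_def closed_expr_def guarded_def)
qed (auto simp: nu_unfold_def)

lemma iter_E0: "e \<in> E0 ar \<Longrightarrow> (nu_unfold ^^ n) e \<in> E0 ar"
  by (induction n) (auto intro: unfold_E0)

lemma exists_mod: "e \<in> E0 ar \<Longrightarrow> \<exists>n. is_mod ((nu_unfold ^^ n) e)"
proof (induction "topnu e" arbitrary: e)
  case 0
  then show ?case
    by (cases e) (auto simp: is_mod_def E0_def closed_expr_def intro: exI[of _ 0])
next
  case (Suc k)
  then obtain x b where eb: "e = Nu x b" by (cases e) auto
  have g: "guarded_aux {x} b" using Suc(3) eb by (auto simp: E0_def guarded_def)
  have "topnu (nu_unfold e) = k" using topnu_subst[OF g, of x e] Suc(2) eb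
    by (simp add: nu_unfold_def)
  then obtain n where "is_mod ((nu_unfold ^^ n) (nu_unfold e))"
    using Suc(1) unfold_E0[OF Suc(3)] by blast
  then show ?case by (metis funpow_Suc_right o_apply)
qed

lemma head_nf_mod: "e \<in> E0 ar \<Longrightarrow> is_mod (head_nf e)"
  unfolding head_nf_def using exists_mod by (metis LeastI_ex)

lemma head_nf_E0: "e \<in> E0 ar \<Longrightarrow> head_nf e \<in> E0 ar"
  unfolding head_nf_def by (rule iter_E0)

lemma unfold_in_succ: "nu_unfold e \<in> insert e (succ e)"
  by (cases e) (auto simp: nu_unfold_def)

theorem mainTheorem14:
  fixes ar :: "'l \<Rightarrow> nat"
    and Tobj :: "('l, 'v) expr set \<Rightarrow> 't set"
    and Tmap :: "('l, 'v) expr set \<Rightarrow> ('l, 'v) expr set \<Rightarrow> (('l, 'v) expr \<Rightarrow> ('l, 'v) expr) \<Rightarrow> 't \<Rightarrow> 't"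
    and lift :: "'l \<Rightarrow> ('l, 'v) expr set \<Rightarrow> ('l, 'v) expr set list \<Rightarrow> 't set"
  assumes "set_functor Tobj Tmap"
    and "\<forall>L. monotone_sp_pred_lifting ar Tobj Tmap lift L"
  shows "locally_finite Tobj Tmap (E0 ar) (eps ar lift)"
  unfolding locally_finite_def
proof
  fix \<phi> :: "('l,'v) expr" assume phi: "\<phi> \<in> E0 ar"
  define W where "W = G Map.empty \<phi>"
  define Y where "Y = W \<inter> E0 ar"
  have cl\<phi>: "fvars \<phi> = {}" using phi by (simp add: E0_def closed_expr_def)
  have Wc: "succ w \<subseteq> W" if "w \<in> W" for w
    using G_closed[of Map.empty \<phi> w] that cl\<phi> unfolding W_def by simp
  have phiW: "\<phi> \<in> W"
    using sub_in_G[of \<phi> Map.empty] cl\<phi> sub_empty[of \<phi>] unfolding W_def by simp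
  have YE: "Y \<subseteq> E0 ar" and YW: "Y \<subseteq> W" unfolding Y_def by auto
  have succY: "nu_unfold y \<in> Y" if yy: "y \<in> Y" for y
  proof -
    have yW: "y \<in> W" using yy YW by blast
    then have "succ y \<subseteq> W" by (rule Wc)
    then have "nu_unfold y \<in> W" using unfold_in_succ[of y] yW by auto
    moreover have "nu_unfold y \<in> E0 ar" using unfold_E0[of y ar] yy YE by blast
    ultimately show ?thesis unfolding Y_def by blast
  qed
  have iterY: "(nu_unfold ^^ n) y \<in> Y" if "y \<in> Y" for y n
    using that by (induction n) (auto intro: succY)
  have "eps ar lift y \<in> Tmap Y (E0 ar) id ` Tobj Y" if yY: "y \<in> Y" for y
  proof -
    have yE: "y \<in> E0 ar" using yY YE by blast
    obtain L es where h: "head_nf y = Mod L es" using head_nf_mod[OF yE] by (auto simp: is_mod_def)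
    have hY: "head_nf y \<in> Y" unfolding head_nf_def using iterY[OF yY] .
    have hE: "Mod L es \<in> E0 ar" using head_nf_E0[OF yE] h by simp
    have len: "length es = ar L" using hE by (simp add: E0_def)
    have esE: "set es \<subseteq> E0 ar" using hE
      by (auto simp: E0_def closed_expr_def guarded_def)
    have esW: "set es \<subseteq> W" using Wc[of "Mod L es"] hY h YW by auto
    have esY: "set es \<subseteq> Y" using esE esW unfolding Y_def by blast
    have ml: "monotone_sp_pred_lifting ar Tobj Tmap lift L" using assms(2) by blast
    note mlu = ml[unfolded monotone_sp_pred_lifting_def]
    obtain t where t: "t \<in> lift L Y (map (\<lambda>x. {x}) es)"
      using conjunct2[OF conjunct2[OF conjunct2[OF mlu]]] len esY by blast
    have nat: "lift L Y (map (\<lambda>B. Y \<inter> id -` B) (map (\<lambda>x. {x}) es))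
        = {t \<in> Tobj Y. Tmap Y (E0 ar) id t \<in> lift L (E0 ar) (map (\<lambda>x. {x}) es)}"
      using conjunct1[OF conjunct2[OF mlu], rule_format, where X=Y and Y="E0 ar" and f=id and Bs="map (\<lambda>x. {x}) es"]
        len esE YE by auto
    have eqm: "map (\<lambda>B. Y \<inter> id -` B) (map (\<lambda>x. {x}) es) = map (\<lambda>x. {x}) es"
      using esY by auto
    have t1: "t \<in> lift L Y (map (\<lambda>B. Y \<inter> id -` B) (map (\<lambda>x. {x}) es))"
      by (subst eqm) (rule t)
    have t2: "t \<in> {t \<in> Tobj Y. Tmap Y (E0 ar) id t \<in> lift L (E0 ar) (map (\<lambda>x. {x}) es)}"
      using t1 unfolding nat .
    then have tt: "t \<in> Tobj Y" "Tmap Y (E0 ar) id t \<in> lift L (E0 ar) (map (\<lambda>x. {x}) es)"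
      by auto
    have ex1: "\<exists>!t. t \<in> lift L (E0 ar) (map (\<lambda>x. {x}) es)"
      using conjunct2[OF conjunct2[OF conjunct2[OF mlu]]] len esE by blast
    then obtain u where u1: "u \<in> lift L (E0 ar) (map (\<lambda>x. {x}) es)"
      and u2: "\<And>v. v \<in> lift L (E0 ar) (map (\<lambda>x. {x}) es) \<Longrightarrow> v = u"
      by (elim ex1E) blast
    have u: "lift L (E0 ar) (map (\<lambda>x. {x}) es) = {u}" using u1 u2 by blast
    have "eps ar lift y = u" unfolding eps_def using h u by simp
    then have "eps ar lift y = Tmap Y (E0 ar) id t" using tt u by auto
    then show ?thesis using tt(1) by (rule image_eqI)
  qed
  moreover have "finite Y" unfolding Y_def W_def using finite_G by blast
  moreover have "\<phi> \<in> Y" using phiW phi unfolding Y_def by blast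
  ultimately show "\<exists>Y. finite Y \<and> \<phi> \<in> Y \<and> subcoalgebra Tobj Tmap (E0 ar) (eps ar lift) Y"
    unfolding subcoalgebra_def using YE by blast
qed

end
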